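(* Let $a,b$ be smooth real functions of one variable and $f(x,y)=a(x)x+b(x)y$. On any open set $U\subset\mathbb{R}^2$ on which the three foliations given by the level curves $x=\text{const}$, $y=\text{const}$ and $f(x,y)=\text{const}$ form a 3-web (i.e. are pairwise transversal), this 3-web is linearizable: near every point of $U$ there is a local diffeomorphism onto an open subset of $\mathbb{R}^2$ carrying the leaves of all three foliations onto (open pieces of) straight lines.
   Context: A 3-web on a 2-dimensional manifold is given by three foliations by smooth curves in general position (pairwise transversal). A 3-web is linear if all three foliations consist of straight lines; it is linearizable if it is locally equivalent to a linear web via a local diffeomorphism. *)

theory Defs
  imports "HOL-Analysis.Analysis"
begin

fun higher_differentiable_on ::
  "'a::real_normed_vector set \<Rightarrow> ('a \<Rightarrow> 'b::real_normed_vector) \<Rightarrow> nat \<Rightarrow> bool" where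
  "higher_differentiable_on S f 0 = continuous_on S f"
| "higher_differentiable_on S f (Suc n) =
     (f differentiable_on S \<and>
      (\<forall>v. higher_differentiable_on S (\<lambda>x. frechet_derivative f (at x) v) n))"

definition smooth_on :: "'a::real_normed_vector set \<Rightarrow> ('a \<Rightarrow> 'b::real_normed_vector) \<Rightarrow> bool" where
  "smooth_on S f \<longleftrightarrow> (\<forall>n. higher_differentiable_on S f n)"

definition diffeo_between :: "('a::real_normed_vector \<Rightarrow> 'a) \<Rightarrow> 'a set \<Rightarrow> 'a set \<Rightarrow> bool" where
  "diffeo_between \<phi> V W \<longleftrightarrow> open V \<and> open W \<and> \<phi> ` V = W \<and> smooth_on V \<phi> \<and>
     (\<exists>\<psi>. smooth_on W \<psi> \<and> (\<forall>q\<in>V. \<psi> (\<phi> q) = q) \<and> (\<forall>w\<in>W. \<phi> (\<psi> w) = w))"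

definition is_line :: "(real \<times> real) set \<Rightarrow> bool" where
  "is_line L \<longleftrightarrow> (\<exists>p v. v \<noteq> 0 \<and> L = {p + t *\<^sub>R v | t. True})"

definition dx :: "(real \<times> real \<Rightarrow> real) \<Rightarrow> real \<times> real \<Rightarrow> real" where
  "dx g p = frechet_derivative g (at p) (1, 0)"
definition dy :: "(real \<times> real \<Rightarrow> real) \<Rightarrow> real \<times> real \<Rightarrow> real" where
  "dy g p = frechet_derivative g (at p) (0, 1)"

definition transversal_at :: "(real \<times> real \<Rightarrow> real) \<Rightarrow> (real \<times> real \<Rightarrow> real) \<Rightarrow> real \<times> real \<Rightarrow> bool" where
  "transversal_at g h p \<longleftrightarrow> g differentiable (at p) \<and> h differentiable (at p) \<and>
     dx g p * dy h p - dy g p * dx h p \<noteq> 0"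

definition three_web :: "(real \<times> real) set \<Rightarrow> (real \<times> real \<Rightarrow> real) \<Rightarrow> (real \<times> real \<Rightarrow> real)
    \<Rightarrow> (real \<times> real \<Rightarrow> real) \<Rightarrow> bool" where
  "three_web U g1 g2 g3 \<longleftrightarrow> open U \<and>
     (\<forall>p\<in>U. transversal_at g1 g2 p \<and> transversal_at g1 g3 p \<and> transversal_at g2 g3 p)"

definition linearizable_web :: "(real \<times> real) set \<Rightarrow> (real \<times> real \<Rightarrow> real) \<Rightarrow> (real \<times> real \<Rightarrow> real)
    \<Rightarrow> (real \<times> real \<Rightarrow> real) \<Rightarrow> bool" where
  "linearizable_web U g1 g2 g3 \<longleftrightarrow>
     (\<forall>p\<in>U. \<exists>V W \<phi>. p \<in> V \<and> V \<subseteq> U \<and> diffeo_between \<phi> V W \<and>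
        (\<forall>g\<in>{g1, g2, g3}. \<forall>c. \<exists>L. is_line L \<and> \<phi> ` {q\<in>V. g q = c} \<subseteq> L))"

end

theory Submission imports Defs "HOL-Homology.Invariance_of_Domain"
begin

abbreviation hd where "hd S f n \<equiv> higher_differentiable_on S f n"

lemma hd_mono: "hd S f (Suc n) \<Longrightarrow> hd S f n"
proof (induction n arbitrary: f)
  case 0 then show ?case by (simp add: differentiable_imp_continuous_on)
next
  case (Suc n)
  have "f differentiable_on S" "\<And>v. hd S (\<lambda>x. frechet_derivative f (at x) v) (Suc n)"
    using Suc.prems by simp_all
  moreover have "\<And>v. hd S (\<lambda>x. frechet_derivative f (at x) v) n"
    using Suc.IH calculation(2) by blast
  ultimately show ?case by (simp only: higher_differentiable_on.simps) blast
qed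

lemma hd_cong: "open S \<Longrightarrow> (\<And>x. x \<in> S \<Longrightarrow> f x = g x) \<Longrightarrow> hd S f n \<Longrightarrow> hd S g n"
proof (induction n arbitrary: f g)
  case 0 then show ?case using continuous_on_cong by force
next
  case (Suc n)
  have df: "f differentiable_on S" using Suc.prems by simp
  have dg: "g differentiable_on S"
    unfolding differentiable_on_eq_differentiable_at[OF Suc.prems(1)] differentiable_def
  proof (intro ballI)
    fix x assume x: "x \<in> S"
    then obtain f' where "(f has_derivative f') (at x)"
      using df Suc.prems(1) by (auto simp: differentiable_on_eq_differentiable_at differentiable_def)
    then show "\<exists>D. (g has_derivative D) (at x)"
      using has_derivative_transform_within_open[where f=f and x=x and s=S and g=g] x Suc.prems(1,2) by blast
  qed
  have "hd S (\<lambda>x. frechet_derivative g (at x) v) n" for v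
  proof (rule Suc.IH[OF Suc.prems(1)])
    show "hd S (\<lambda>x. frechet_derivative f (at x) v) n" using Suc.prems by simp
    fix x assume "x \<in> S"
    then show "frechet_derivative f (at x) v = frechet_derivative g (at x) v"
      using frechet_derivative_transform_within_open[of f x S g] df Suc.prems(1,2)
      by (simp add: differentiable_on_eq_differentiable_at)
  qed
  then show ?case using dg by simp
qed

lemma hd_SucI:
  assumes "open S" "\<And>x. x \<in> S \<Longrightarrow> (f has_derivative f' x) (at x)"
    "\<And>v. hd S (\<lambda>x. f' x v) n"
  shows "hd S f (Suc n)"
proof -
  have "f differentiable_on S"
    using assms(2) by (meson differentiableI differentiable_at_imp_differentiable_on)
  moreover have "hd S (\<lambda>x. frechet_derivative f (at x) v) n" for v
    by (rule hd_cong[OF assms(1) _ assms(3)[of v]]) (metis assms(2) frechet_derivative_at)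
  ultimately show ?thesis by simp
qed

lemma hd_SucD:
  assumes "open S" "hd S f (Suc n)" "x \<in> S"
  shows "(f has_derivative frechet_derivative f (at x)) (at x)"
  using assms by (metis differentiable_on_eq_differentiable_at frechet_derivative_works higher_differentiable_on.simps(2))

lemma hd_const: "open S \<Longrightarrow> hd S (\<lambda>x. c) n"
proof (induction n arbitrary: c)
  case 0 then show ?case by simp
next
  case (Suc n)
  show ?case by (rule hd_SucI[where f'="\<lambda>x v. 0"]) (use Suc in auto)
qed

lemma hd_linear: "open S \<Longrightarrow> bounded_linear L \<Longrightarrow> hd S L n"
proof (cases n)
  case 0
  assume "bounded_linear L" then show ?thesis
    using 0 by (simp add: linear_continuous_on)
next
  case (Suc m)
  assume S: "open S" and L: "bounded_linear L"
  show ?thesis unfolding Suc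
    by (rule hd_SucI[where f'="\<lambda>x. L", OF S bounded_linear_imp_has_derivative[OF L] hd_const[OF S]])
qed

lemma hd_add: "open S \<Longrightarrow> hd S f n \<Longrightarrow> hd S g n \<Longrightarrow> hd S (\<lambda>x. f x + g x) n"
proof (induction n arbitrary: f g)
  case 0 then show ?case by (simp add: continuous_on_add)
next
  case (Suc n)
  show ?case
  proof (rule hd_SucI[where f'="\<lambda>x v. frechet_derivative f (at x) v + frechet_derivative g (at x) v"])
    show "open S" by fact
    fix x assume x: "x \<in> S"
    show "((\<lambda>x. f x + g x) has_derivative (\<lambda>v. frechet_derivative f (at x) v + frechet_derivative g (at x) v)) (at x)"
      by (rule has_derivative_add[OF hd_SucD[OF Suc.prems(1,2) x] hd_SucD[OF Suc.prems(1,3) x]])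
  next
    fix v
    have df: "hd S (\<lambda>x. frechet_derivative f (at x) v) n" using Suc.prems(2) by simp
    have dg: "hd S (\<lambda>x. frechet_derivative g (at x) v) n" using Suc.prems(3) by simp
    show "hd S (\<lambda>x. frechet_derivative f (at x) v + frechet_derivative g (at x) v) n"
      by (rule Suc.IH[OF Suc.prems(1) df dg])
  qed
qed

lemma hd_scaleR: "open S \<Longrightarrow> hd S (f::_\<Rightarrow>real) n \<Longrightarrow> hd S g n \<Longrightarrow> hd S (\<lambda>x. f x *\<^sub>R g x) n"
proof (induction n arbitrary: f g)
  case 0 then show ?case by (simp add: continuous_on_scaleR)
next
  case (Suc n)
  show ?case
  proof (rule hd_SucI[where f'="\<lambda>x v. f x *\<^sub>R frechet_derivative g (at x) v + frechet_derivative f (at x) v *\<^sub>R g x"])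
    show "open S" by fact
    fix x assume x: "x \<in> S"
    show "((\<lambda>x. f x *\<^sub>R g x) has_derivative (\<lambda>v. f x *\<^sub>R frechet_derivative g (at x) v + frechet_derivative f (at x) v *\<^sub>R g x)) (at x)"
      by (rule has_derivative_scaleR[OF hd_SucD[OF Suc.prems(1,2) x] hd_SucD[OF Suc.prems(1,3) x]])
  next
    fix v
    have f: "hd S f n" by (rule hd_mono[OF Suc.prems(2)])
    have g: "hd S g n" by (rule hd_mono[OF Suc.prems(3)])
    have df: "hd S (\<lambda>x. frechet_derivative f (at x) v) n" using Suc.prems(2) by simp
    have dg: "hd S (\<lambda>x. frechet_derivative g (at x) v) n" using Suc.prems(3) by simp
    show "hd S (\<lambda>x. f x *\<^sub>R frechet_derivative g (at x) v + frechet_derivative f (at x) v *\<^sub>R g x) n"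
      by (rule hd_add[OF Suc.prems(1) Suc.IH[OF Suc.prems(1) f dg] Suc.IH[OF Suc.prems(1) df g]])
  qed
qed

lemma hd_mult: "open S \<Longrightarrow> hd S (f::_\<Rightarrow>real) n \<Longrightarrow> hd S g n \<Longrightarrow> hd S (\<lambda>x. f x * g x) n"
  using hd_scaleR[of S f n g] by simp

lemma hd_lincomp: "open S \<Longrightarrow> bounded_linear L \<Longrightarrow> hd S f n \<Longrightarrow> hd S (\<lambda>x. L (f x)) n"
proof (induction n arbitrary: f)
  case 0 then show ?case
    by (simp add: continuous_on_compose2[of UNIV L S f] linear_continuous_on)
next
  case (Suc n)
  show ?case
  proof (rule hd_SucI[where f'="\<lambda>x v. L (frechet_derivative f (at x) v)"])
    show "open S" by fact
    fix x assume x: "x \<in> S"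
    show "((\<lambda>x. L (f x)) has_derivative (\<lambda>v. L (frechet_derivative f (at x) v))) (at x)"
      by (rule bounded_linear.has_derivative[OF Suc.prems(2) hd_SucD[OF Suc.prems(1,3) x]])
  next
    fix v
    have df: "hd S (\<lambda>x. frechet_derivative f (at x) v) n" using Suc.prems(3) by simp
    show "hd S (\<lambda>x. L (frechet_derivative f (at x) v)) n"
      by (rule Suc.IH[OF Suc.prems(1,2) df])
  qed
qed

lemma hd_pair: "open S \<Longrightarrow> hd S f n \<Longrightarrow> hd S g n \<Longrightarrow> hd S (\<lambda>x. (f x, g x)) n"
proof (induction n arbitrary: f g)
  case 0 then show ?case by (simp add: continuous_on_Pair)
next
  case (Suc n)
  show ?case
  proof (rule hd_SucI[where f'="\<lambda>x v. (frechet_derivative f (at x) v, frechet_derivative g (at x) v)"])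
    show "open S" by fact
    fix x assume x: "x \<in> S"
    show "((\<lambda>x. (f x, g x)) has_derivative (\<lambda>v. (frechet_derivative f (at x) v, frechet_derivative g (at x) v))) (at x)"
      by (rule has_derivative_Pair[OF hd_SucD[OF Suc.prems(1,2) x] hd_SucD[OF Suc.prems(1,3) x]])
  next
    fix v
    have df: "hd S (\<lambda>x. frechet_derivative f (at x) v) n" using Suc.prems(2) by simp
    have dg: "hd S (\<lambda>x. frechet_derivative g (at x) v) n" using Suc.prems(3) by simp
    show "hd S (\<lambda>x. (frechet_derivative f (at x) v, frechet_derivative g (at x) v)) n"
      by (rule Suc.IH[OF Suc.prems(1) df dg])
  qed
qed

lemma hd_sum: assumes "open S" "finite I" "\<And>i. i \<in> I \<Longrightarrow> hd S (f i) n" shows "hd S (\<lambda>x. \<Sum>i\<in>I. f i x) n"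
  using assms(2,3)
proof (induction I rule: finite_induct)
  case empty then show ?case by (simp add: hd_const assms(1))
next
  case (insert i I) then show ?case by (simp add: hd_add assms(1))
qed

lemma linear_basis_expand:
  fixes w :: "'c::euclidean_space"
  assumes "linear L"
  shows "L w = (\<Sum>i\<in>Basis. (w \<bullet> i) *\<^sub>R L i)"
proof -
  have "L w = L (\<Sum>i\<in>Basis. (w \<bullet> i) *\<^sub>R i)" by (simp add: euclidean_representation)
  also have "\<dots> = (\<Sum>i\<in>Basis. (w \<bullet> i) *\<^sub>R L i)"
    using assms by (simp add: linear_sum linear_scale)
  finally show ?thesis .
qed

lemma hd_compose:
  fixes h :: "'c::euclidean_space \<Rightarrow> 'd::real_normed_vector"
  shows "open S \<Longrightarrow> open T \<Longrightarrow> f ` S \<subseteq> T \<Longrightarrow> hd T h n \<Longrightarrow> hd S f n \<Longrightarrow> hd S (\<lambda>x. h (f x)) n"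
proof (induction n arbitrary: f h)
  case 0 then show ?case by (simp add: continuous_on_compose2)
next
  case (Suc n)
  let ?D = "\<lambda>x v. \<Sum>i\<in>Basis. (frechet_derivative f (at x) v \<bullet> i) *\<^sub>R frechet_derivative h (at (f x)) i"
  show ?case
  proof (rule hd_SucI[where f'="?D"])
    show "open S" by fact
    fix x assume x: "x \<in> S"
    have hf: "(f has_derivative frechet_derivative f (at x)) (at x)"
      using hd_SucD[OF Suc.prems(1,5) x] .
    have hh: "(h has_derivative frechet_derivative h (at (f x))) (at (f x))"
      using hd_SucD[OF Suc.prems(2,4)] Suc.prems(3) x by blast
    have "((h \<circ> f) has_derivative (frechet_derivative h (at (f x)) \<circ> frechet_derivative f (at x))) (at x)"
      by (rule diff_chain_at[OF hf hh])
    moreover have "(frechet_derivative h (at (f x)) \<circ> frechet_derivative f (at x)) = ?D x"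
      by (rule ext) (simp only: o_def linear_basis_expand[OF has_derivative_linear[OF hh], of "frechet_derivative f (at x) _"])
    ultimately show "((\<lambda>x. h (f x)) has_derivative ?D x) (at x)" by (simp add: o_def)
  next
    fix v
    have f: "hd S f n" by (rule hd_mono[OF Suc.prems(5)])
    have df: "hd S (\<lambda>x. frechet_derivative f (at x) v) n" using Suc.prems(5) by simp
    have "hd S (\<lambda>x. (frechet_derivative f (at x) v \<bullet> i) *\<^sub>R frechet_derivative h (at (f x)) i) n" if "i \<in> Basis" for i
    proof (rule hd_scaleR[OF Suc.prems(1)])
      show "hd S (\<lambda>x. frechet_derivative f (at x) v \<bullet> i) n"
        by (rule hd_lincomp[OF Suc.prems(1) bounded_linear_inner_left df])
      have dh: "hd T (\<lambda>y. frechet_derivative h (at y) i) n" using Suc.prems(4) by simp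
      show "hd S (\<lambda>x. frechet_derivative h (at (f x)) i) n"
        by (rule Suc.IH[OF Suc.prems(1,2,3) dh f])
    qed
    then show "hd S (\<lambda>x. ?D x v) n"
      by (rule hd_sum[OF Suc.prems(1) finite_Basis])
  qed
qed

lemma open_nonzero: "open {t::real. t \<noteq> 0}"
proof -
  have "{t::real. t \<noteq> 0} = - {0}" by auto
  then show ?thesis by (simp add: open_Compl)
qed

lemma hd_inverse: "hd {t::real. t \<noteq> 0} inverse n"
proof (induction n)
  case 0 then show ?case by (simp add: continuous_on_inverse continuous_on_id)
next
  case (Suc n)
  show ?case
  proof (rule hd_SucI[OF open_nonzero, where f'="\<lambda>x v. (- v) * (inverse x * inverse x)"])
    fix x :: real assume "x \<in> {t. t \<noteq> 0}"
    then have "(inverse has_derivative (\<lambda>h. - (inverse x * h * inverse x))) (at x)"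
      using Deriv.has_derivative_inverse[where f="\<lambda>x. x" and x=x, OF _ has_derivative_ident] by simp
    then show "(inverse has_derivative (\<lambda>v. - v * (inverse x * inverse x))) (at x)"
      by (simp add: fun_eq_iff algebra_simps)
  next
    fix v show "hd {t::real. t \<noteq> 0} (\<lambda>x. - v * (inverse x * inverse x)) n"
      by (rule hd_mult[OF open_nonzero hd_const[OF open_nonzero] hd_mult[OF open_nonzero Suc Suc]])
  qed
qed



lemma local_diffeo:
  fixes F :: "real \<times> real \<Rightarrow> real"
  assumes smF: "\<And>n. hd UNIV F n" and U: "open U"
    and Fx: "\<And>q. q \<in> U \<Longrightarrow> frechet_derivative F (at q) (1,0) \<noteq> 0" and p: "p \<in> U"
  shows "\<exists>V W. p \<in> V \<and> V \<subseteq> U \<and> diffeo_between (\<lambda>q. (F q, snd q)) V W"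
proof -
  define Dx where "Dx = (\<lambda>q. frechet_derivative F (at q) (1,0))"
  define Dy where "Dy = (\<lambda>q. frechet_derivative F (at q) (0,1))"
  define \<phi> where "\<phi> = (\<lambda>q. (F q, snd q))"
  have derF: "\<And>q. (F has_derivative frechet_derivative F (at q)) (at q)"
    by (rule hd_SucD[OF open_UNIV smF]) simp
  have lin: "frechet_derivative F (at q) (s,t) = s * Dx q + t * Dy q" for q s t
  proof -
    have L: "linear (frechet_derivative F (at q))" using derF has_derivative_linear by blast
    have "(s,t) = s *\<^sub>R (1,0) + t *\<^sub>R ((0,1)::real\<times>real)" by simp
    then have "frechet_derivative F (at q) (s,t) = frechet_derivative F (at q) (s *\<^sub>R (1,0) + t *\<^sub>R (0,1))"
      by metis
    also have "\<dots> = s * Dx q + t * Dy q"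
      by (simp only: linear_add[OF L] linear_scale[OF L]) (simp add: Dx_def Dy_def)
    finally show ?thesis .
  qed
  obtain r where r: "r > 0" "ball p r \<subseteq> U" using U p open_contains_ball by blast
  define V where "V = ball p r"
  have oV: "open V" and pV: "p \<in> V" and VU: "V \<subseteq> U" using r by (auto simp: V_def)
  have hdphi: "hd UNIV \<phi> n" for n
    unfolding \<phi>_def by (intro hd_pair smF hd_linear bounded_linear_snd open_UNIV)
  have cphi: "continuous_on UNIV \<phi>" using hdphi[of 0] by simp
  have derx: "((\<lambda>t. F (t,y)) has_derivative (\<lambda>h. h * Dx (t,y))) (at t)" for t y
  proof -
    have "((\<lambda>t. (t,y)) has_derivative (\<lambda>h. (h,0))) (at t)"
      by (auto intro!: has_derivative_Pair has_derivative_ident has_derivative_const)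
    from diff_chain_at[OF this derF]
    show ?thesis by (simp add: o_def lin)
  qed
  have aux: False if "x1 < x2" "(x1,y) \<in> V" "(x2,y) \<in> V" "F (x1,y) = F (x2,y)" for x1 x2 y
  proof -
    have "continuous_on {x1..x2} (\<lambda>t. F (t,y))"
      using derx by (meson continuous_at_imp_continuous_on has_derivative_continuous)
    from Rolle_deriv[OF that(1) that(4) this derx]
    obtain z where z: "x1 < z" "z < x2" "(\<lambda>h. h * Dx (z,y)) = (\<lambda>v. 0)" by blast
    then have "Dx (z,y) = 0" by (metis mult_1)
    define u where "u = (x2 - z) / (x2 - x1)"
    have "u *\<^sub>R (x1,y) + (1 - u) *\<^sub>R (x2,y) \<in> V"
    proof -
      have "0 \<le> u" "0 \<le> 1 - u" using z that(1) by (auto simp: u_def divide_simps)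
      then show ?thesis using that(2,3) unfolding V_def
        by (intro convexD[OF convex_ball]) auto
    qed
    moreover have "u *\<^sub>R (x1,y) + (1 - u) *\<^sub>R (x2,y) = (z,y)"
    proof -
      have h: "u * (x2 - x1) = x2 - z" using that(1) unfolding u_def by simp
      have "u * x1 + (1 - u) * x2 = x2 - u * (x2 - x1)" by (simp add: algebra_simps)
      with h have e: "u * x1 + (1 - u) * x2 = z" by linarith
      have "u *\<^sub>R (x1,y) + (1 - u) *\<^sub>R (x2,y) = (u * x1 + (1 - u) * x2, u * y + (1 - u) * y)" by simp
      also have "\<dots> = (z,y)" by (simp only: e) (simp add: algebra_simps)
      finally show ?thesis .
    qed
    ultimately have "(z,y) \<in> U" using VU by auto
    with Fx \<open>Dx (z,y) = 0\<close> show False unfolding Dx_def by blast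
  qed
  have inj: "inj_on \<phi> V"
  proof (rule inj_onI)
    fix q1 q2 assume q: "q1 \<in> V" "q2 \<in> V" "\<phi> q1 = \<phi> q2"
    obtain x1 y1 where q1: "q1 = (x1,y1)" by force
    obtain x2 y2 where q2: "q2 = (x2,y2)" by force
    have y: "y1 = y2" and Fe: "F (x1,y1) = F (x2,y1)" using q by (auto simp: \<phi>_def q1 q2)
    have "x1 = x2"
    proof (rule linorder_cases[of x1 x2])
      assume "x1 < x2" then show ?thesis using aux[of x1 x2 y1] q Fe y q1 q2 by auto
    next
      assume "x2 < x1" then show ?thesis using aux[of x2 x1 y1] q Fe y q1 q2 by auto
    qed
    then show "q1 = q2" using q1 q2 y by simp
  qed
  define W where "W = \<phi> ` V"
  have oW: "open W" unfolding W_def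
    by (rule invariance_of_domain[OF continuous_on_subset[OF cphi] oV inj]) simp
  define \<psi> where "\<psi> = the_inv_into V \<phi>"
  have psiV: "\<psi> w \<in> V" if "w \<in> W" for w
    using that inj unfolding \<psi>_def W_def by (simp add: the_inv_into_into)
  have psiphi: "\<psi> (\<phi> q) = q" if "q \<in> V" for q
    using that inj unfolding \<psi>_def by (simp add: the_inv_into_f_f)
  have phipsi: "\<phi> (\<psi> w) = w" if "w \<in> W" for w
    using that inj unfolding \<psi>_def W_def by (simp add: f_the_inv_into_f)
  define \<psi>' where "\<psi>' = (\<lambda>w k. ((fst k + (- snd k) * Dy (\<psi> w)) * inverse (Dx (\<psi> w)), snd k))"
  have derpsi: "(\<psi> has_derivative \<psi>' w) (at w)" if w: "w \<in> W" for w
  proof (rule has_derivative_inverse_strong_x[where f=\<phi> and f'="\<lambda>h. (frechet_derivative F (at (\<psi> w)) h, snd h)"])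
    show "open V" by fact
    show "\<psi> w \<in> V" using psiV w .
    show "continuous_on V \<phi>" using continuous_on_subset[OF cphi] by simp
    show "\<And>x. x \<in> V \<Longrightarrow> \<psi> (\<phi> x) = x" using psiphi .
    show "(\<phi> has_derivative (\<lambda>h. (frechet_derivative F (at (\<psi> w)) h, snd h))) (at (\<psi> w))"
      unfolding \<phi>_def by (intro has_derivative_Pair derF bounded_linear_imp_has_derivative bounded_linear_snd)
    have "Dx (\<psi> w) \<noteq> 0" using Fx psiV[OF w] VU unfolding Dx_def by blast
    then show "(\<lambda>h. (frechet_derivative F (at (\<psi> w)) h, snd h)) \<circ> \<psi>' w = id"
    proof -
      assume nz: "Dx (\<psi> w) \<noteq> 0"
      show ?thesis
      proof (rule ext)
        fix k :: "real \<times> real"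
        obtain k1 k2 where k: "k = (k1, k2)" by force
        define A where "A = k1 + (- k2) * Dy (\<psi> w)"
        have pk: "\<psi>' w k = (A * inverse (Dx (\<psi> w)), k2)"
          unfolding \<psi>'_def k A_def fst_conv snd_conv by (rule refl)
        have A: "A * inverse (Dx (\<psi> w)) * Dx (\<psi> w) = A"
          using nz by (simp add: mult.assoc)
        have "frechet_derivative F (at (\<psi> w)) (A * inverse (Dx (\<psi> w)), k2) = k1"
          unfolding lin A unfolding A_def by simp
        then show "((\<lambda>h. (frechet_derivative F (at (\<psi> w)) h, snd h)) \<circ> \<psi>' w) k = id k"
          unfolding o_def id_def pk using k by simp
      qed
    qed
    show "\<phi> (\<psi> w) = w" using phipsi w .
  qed
  have hdDx: "hd UNIV Dx n" for n using smF[of "Suc n"] by (simp add: Dx_def)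
  have hdDy: "hd UNIV Dy n" for n using smF[of "Suc n"] by (simp add: Dy_def)
  have hdpsi: "hd W \<psi> n" for n
  proof (induction n)
    case 0
    have "continuous_on W \<psi>"
      using derpsi by (meson continuous_at_imp_continuous_on has_derivative_continuous)
    then show ?case by simp
  next
    case (Suc n)
    show ?case
    proof (rule hd_SucI[OF oW derpsi])
      fix k :: "real \<times> real"
      have e: "(\<lambda>w. \<psi>' w k) = (\<lambda>w. ((fst k + (- snd k) * Dy (\<psi> w)) * inverse (Dx (\<psi> w)), snd k))"
        unfolding \<psi>'_def by (rule refl)
      have img: "(\<lambda>w. Dx (\<psi> w)) ` W \<subseteq> {t. t \<noteq> 0}"
      proof
        fix t assume "t \<in> (\<lambda>w. Dx (\<psi> w)) ` W"
        then obtain w where w: "w \<in> W" "t = Dx (\<psi> w)" by blast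
        have "\<psi> w \<in> U" using psiV[OF w(1)] VU by blast
        then show "t \<in> {t. t \<noteq> 0}" using Fx w(2) unfolding Dx_def by simp
      qed
      have t1: "hd W (\<lambda>w. Dy (\<psi> w)) n" by (rule hd_compose[OF oW open_UNIV _ hdDy Suc]) simp
      have t2: "hd W (\<lambda>w. Dx (\<psi> w)) n" by (rule hd_compose[OF oW open_UNIV _ hdDx Suc]) simp
      have t3: "hd W (\<lambda>w. inverse (Dx (\<psi> w))) n" by (rule hd_compose[OF oW open_nonzero img hd_inverse t2])
      have t4: "hd W (\<lambda>w. (fst k + (- snd k) * Dy (\<psi> w))) n"
        by (rule hd_add[OF oW hd_const[OF oW] hd_mult[OF oW hd_const[OF oW] t1]])
      show "hd W (\<lambda>w. \<psi>' w k) n" unfolding e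
        by (rule hd_pair[OF oW hd_mult[OF oW t4 t3] hd_const[OF oW]])
    qed (simp_all)
  qed
  have smphi: "smooth_on V \<phi>" unfolding smooth_on_def
  proof
    fix n
    show "hd V \<phi> n"
      using hd_compose[OF oV open_UNIV _ hdphi hd_linear[OF oV bounded_linear_ident]] by simp
  qed
  have smpsi: "smooth_on W \<psi>" unfolding smooth_on_def using hdpsi by blast
  have "diffeo_between \<phi> V W"
    unfolding diffeo_between_def
  proof (intro conjI)
    show "open V" "open W" "smooth_on V \<phi>" by (fact oV, fact oW, fact smphi)
    show "\<phi> ` V = W" by (simp add: W_def)
    show "\<exists>\<psi>. smooth_on W \<psi> \<and> (\<forall>q\<in>V. \<psi> (\<phi> q) = q) \<and> (\<forall>w\<in>W. \<phi> (\<psi> w) = w)"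
      by (intro exI[of _ \<psi>] conjI ballI smpsi psiphi phipsi)
  qed
  then show ?thesis using pV VU unfolding \<phi>_def by blast
qed


lemma Dsnd: "frechet_derivative snd (at (q::real\<times>real)) = snd"
  by (rule frechet_derivative_at[symmetric]) (rule bounded_linear_imp_has_derivative[OF bounded_linear_snd])

theorem mainTheorem2:
  fixes a b :: "real \<Rightarrow> real" and U :: "(real \<times> real) set"
  assumes "smooth_on UNIV a" and "smooth_on UNIV b"
    and "three_web U fst snd (\<lambda>(x, y). a x * x + b x * y)"
  shows "linearizable_web U fst snd (\<lambda>(x, y). a x * x + b x * y)"
proof -
  define F where "F = (\<lambda>(x, y). a x * x + b x * y)"
  have Feq: "F = (\<lambda>q. a (fst q) * fst q + b (fst q) * snd q)"
    unfolding F_def by (simp add: fun_eq_iff)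
  have ha: "hd UNIV a n" and hb: "hd UNIV b n" for n
    using assms(1,2) unfolding smooth_on_def by blast+
  have hfst: "hd UNIV (fst::real\<times>real\<Rightarrow>real) n" for n by (rule hd_linear[OF open_UNIV bounded_linear_fst])
  have hsnd: "hd UNIV (snd::real\<times>real\<Rightarrow>real) n" for n by (rule hd_linear[OF open_UNIV bounded_linear_snd])
  have haf: "hd UNIV (\<lambda>q::real\<times>real. a (fst q)) n" for n
    by (rule hd_compose[OF open_UNIV open_UNIV _ ha hfst]) simp
  have hbf: "hd UNIV (\<lambda>q::real\<times>real. b (fst q)) n" for n
    by (rule hd_compose[OF open_UNIV open_UNIV _ hb hfst]) simp
  have smF: "hd UNIV F n" for n
    unfolding Feq by (rule hd_add[OF open_UNIV hd_mult[OF open_UNIV haf hfst] hd_mult[OF open_UNIV hbf hsnd]])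
  have web: "three_web U fst snd F" using assms(3) unfolding F_def .
  have oU: "open U" using web unfolding three_web_def by blast
  have Fx: "frechet_derivative F (at q) (1,0) \<noteq> 0" if "q \<in> U" for q
  proof -
    have "transversal_at snd F q" using web that unfolding three_web_def by blast
    then show ?thesis unfolding transversal_at_def dx_def dy_def Dsnd by simp
  qed
  show ?thesis
    unfolding linearizable_web_def F_def[symmetric]
  proof
    fix p assume p: "p \<in> U"
    obtain V W where VW: "p \<in> V" "V \<subseteq> U" "diffeo_between (\<lambda>q. (F q, snd q)) V W"
      using local_diffeo[OF smF oU Fx p] by blast
    have L1: "\<exists>L. is_line L \<and> (\<lambda>q. (F q, snd q)) ` {q \<in> V. fst q = c} \<subseteq> L" for c
    proof (intro exI conjI)
      show "is_line {(a c * c, 0) + t *\<^sub>R (b c, 1) | t. True}"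
        unfolding is_line_def by (rule exI[of _ "(a c * c, 0)"], rule exI[of _ "(b c, 1)"]) (simp add: zero_prod_def)
      show "(\<lambda>q. (F q, snd q)) ` {q \<in> V. fst q = c} \<subseteq> {(a c * c, 0) + t *\<^sub>R (b c, 1) | t. True}"
      proof (rule subsetI)
        fix z assume "z \<in> (\<lambda>q. (F q, snd q)) ` {q \<in> V. fst q = c}"
        then obtain x y where xy: "x = c" "z = (F (x, y), y)" by force
        then have "z = (a c * c, 0) + (y) *\<^sub>R (b c, 1)" by (simp add: F_def mult.commute)
        then show "z \<in> {(a c * c, 0) + t *\<^sub>R (b c, 1) | t. True}" by blast
      qed
    qed
    have L2: "\<exists>L. is_line L \<and> (\<lambda>q. (F q, snd q)) ` {q \<in> V. snd q = c} \<subseteq> L" for c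
    proof (intro exI conjI)
      show "is_line {(0, c) + t *\<^sub>R (1, 0) | t. True}"
        unfolding is_line_def by (rule exI[of _ "(0, c)"], rule exI[of _ "(1, 0)"]) (simp add: zero_prod_def)
      show "(\<lambda>q. (F q, snd q)) ` {q \<in> V. snd q = c} \<subseteq> {(0, c) + t *\<^sub>R (1, 0) | t. True}"
      proof (rule subsetI)
        fix z assume "z \<in> (\<lambda>q. (F q, snd q)) ` {q \<in> V. snd q = c}"
        then obtain x y where xy: "y = c" "z = (F (x, y), y)" by force
        then have "z = (0, c) + (F (x, y)) *\<^sub>R (1, 0)" by (simp add: )
        then show "z \<in> {(0, c) + t *\<^sub>R (1, 0) | t. True}" by blast
      qed
    qed
    have L3: "\<exists>L. is_line L \<and> (\<lambda>q. (F q, snd q)) ` {q \<in> V. F q = c} \<subseteq> L" for c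
    proof (intro exI conjI)
      show "is_line {(c, 0) + t *\<^sub>R (0, 1) | t. True}"
        unfolding is_line_def by (rule exI[of _ "(c, 0)"], rule exI[of _ "(0, 1)"]) (simp add: zero_prod_def)
      show "(\<lambda>q. (F q, snd q)) ` {q \<in> V. F q = c} \<subseteq> {(c, 0) + t *\<^sub>R (0, 1) | t. True}"
      proof (rule subsetI)
        fix z assume "z \<in> (\<lambda>q. (F q, snd q)) ` {q \<in> V. F q = c}"
        then obtain x y where xy: "F (x, y) = c" "z = (F (x, y), y)" by force
        then have "z = (c, 0) + (y) *\<^sub>R (0, 1)" by (simp add: )
        then show "z \<in> {(c, 0) + t *\<^sub>R (0, 1) | t. True}" by blast
      qed
    qed
    have "\<forall>g\<in>{fst, snd, F}. \<forall>c. \<exists>L. is_line L \<and> (\<lambda>q. (F q, snd q)) ` {q \<in> V. g q = c} \<subseteq> L"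
      using L1 L2 L3 by blast
    then show "\<exists>V W \<phi>. p \<in> V \<and> V \<subseteq> U \<and> diffeo_between \<phi> V W \<and>
        (\<forall>g\<in>{fst, snd, F}. \<forall>c. \<exists>L. is_line L \<and> \<phi> ` {q \<in> V. g q = c} \<subseteq> L)"
      using VW by blast
  qed
qed

end
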